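(* Let $\mathcal G$ be a cluster graph on $l$ vertices consisting of $m$ clusters, and let $L_{\mathrm{nrm}}=C^{-1/2}(D-A)C^{-1/2}$ be its normalized Laplacian, where $A$ is the adjacency matrix, $D$ the degree matrix and $C=D+I$. Let $N\in\mathbb R^{l\times l}$ be a symmetric matrix, let $\tilde L_{\mathrm{nrm}}=L_{\mathrm{nrm}}+N$, and let $\tilde m$ be the number of eigenvalues of $\tilde L_{\mathrm{nrm}}$ (counted with multiplicity) that are less than $0.5$. If $\|N\|<0.5$, where $\|\cdot\|$ is the induced 2-norm, then $\tilde m=m$.
   Context: A cluster graph is a disjoint union of complete graphs (its clusters). Graphs are undirected without self-loops. *)

theory Defs
  imports "HOL-Analysis.Analysis" "HOL-Computational_Algebra.Polynomial"
begin

text \<open>Graphs on the finite vertex type 'n (so l = CARD('n)), given by an edge relation E.\<close>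

definition cluster_graph :: "('n::finite \<Rightarrow> 'n \<Rightarrow> bool) \<Rightarrow> nat \<Rightarrow> bool" where
  "cluster_graph E m \<longleftrightarrow>
     (\<exists>R. equiv UNIV R \<and> (\<forall>x y. E x y \<longleftrightarrow> x \<noteq> y \<and> (x, y) \<in> R) \<and> card (UNIV // R) = m)"

definition adj_mat :: "('n::finite \<Rightarrow> 'n \<Rightarrow> bool) \<Rightarrow> real^'n^'n" where
  "adj_mat E = (\<chi> i j. if E i j then 1 else 0)"

definition degree :: "('n::finite \<Rightarrow> 'n \<Rightarrow> bool) \<Rightarrow> 'n \<Rightarrow> nat" where
  "degree E i = card {j. E i j}"

definition deg_mat :: "('n::finite \<Rightarrow> 'n \<Rightarrow> bool) \<Rightarrow> real^'n^'n" where
  "deg_mat E = (\<chi> i j. if i = j then real (degree E i) else 0)"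

definition C_inv_sqrt :: "('n::finite \<Rightarrow> 'n \<Rightarrow> bool) \<Rightarrow> real^'n^'n" where
  "C_inv_sqrt E = (\<chi> i j. if i = j then 1 / sqrt (real (degree E i) + 1) else 0)"

definition norm_laplacian :: "('n::finite \<Rightarrow> 'n \<Rightarrow> bool) \<Rightarrow> real^'n^'n" where
  "norm_laplacian E = C_inv_sqrt E ** (deg_mat E - adj_mat E) ** C_inv_sqrt E"

definition charpoly :: "real^'n^'n \<Rightarrow> real poly" where
  "charpoly M = det (\<chi> i j. (if i = j then [:0, 1:] else 0) - [:M $ i $ j:])"

definition eig_count_below :: "real^'n::finite^'n \<Rightarrow> real \<Rightarrow> nat" where
  "eig_count_below M t = (\<Sum>a\<in>{a. poly (charpoly M) a = 0 \<and> a < t}. order a (charpoly M))"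

definition norm2 :: "real^'n::finite^'n \<Rightarrow> real" where
  "norm2 N = onorm (\<lambda>x. N *v x)"

end

theory Submission imports Defs begin

lemma spectral_subspace:
  fixes M :: "real^'n^'n"
  assumes sym: "\<And>x y. (M *v x) \<bullet> y = x \<bullet> (M *v y)"
  shows "subspace S \<Longrightarrow> (\<And>x. x \<in> S \<Longrightarrow> M *v x \<in> S) \<Longrightarrow>
    \<exists>B \<mu>. B \<subseteq> S \<and> pairwise orthogonal B \<and> (\<forall>v\<in>B. norm v = 1 \<and> M *v v = \<mu> v *\<^sub>R v) \<and> S \<subseteq> span B"
proof (induction "dim S" arbitrary: S rule: less_induct)
  case less
  show ?case
  proof (cases "S = {0}")
    case True then show ?thesis by (intro exI[of _ "{}"]) auto
  next
    case False
    define q where "q = (\<lambda>x::real^'n. x \<bullet> (M *v x))"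
    let ?T = "S \<inter> sphere 0 1"
    have cT: "compact ?T"
      using closed_subspace[OF less.prems(1)] compact_sphere compact_Int_closed
      by (metis Int_commute)
    obtain v where v: "v \<in> S" "v \<noteq> 0" using False less.prems(1) subspace_0 by blast
    have "v /\<^sub>R norm v \<in> ?T" using v less.prems(1) by (simp add: subspace_scale)
    then have neT: "?T \<noteq> {}" by blast
    have contq: "continuous_on ?T q" unfolding q_def
      by (intro continuous_intros linear_continuous_on matrix_vector_mul_bounded_linear)
    obtain x0 where x0: "x0 \<in> ?T" and x0max: "\<And>y. y \<in> ?T \<Longrightarrow> q y \<le> q x0"
      using continuous_attains_sup[OF cT neT contq] by blast
    define lam where "lam = q x0"
    have x0S: "x0 \<in> S" and nx0: "norm x0 = 1" using x0 by auto
    have x0x0: "x0 \<bullet> x0 = 1" using nx0 by (simp add: norm_eq_1)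
    have qscale: "q (c *\<^sub>R z) = c^2 * q z" for c z
      unfolding q_def by (simp add: matrix_vector_mult_scaleR power2_eq_square)
    have qle: "q z \<le> lam * (z \<bullet> z)" if zS: "z \<in> S" for z
    proof (cases "z = 0")
      case True then show ?thesis by (simp add: q_def)
    next
      case False
      have "z /\<^sub>R norm z \<in> ?T" using zS False less.prems(1) by (simp add: subspace_scale)
      then have "q (z /\<^sub>R norm z) \<le> lam" using x0max lam_def by blast
      then have "q z / (norm z)^2 \<le> lam" using qscale[of "inverse (norm z)" z]
        by (simp add: power_inverse divide_inverse mult.commute)
      then have "q z \<le> lam * (norm z)^2" using False by (simp add: divide_le_eq)
      then show ?thesis by (simp add: power2_norm_eq_inner)
    qed
    have orth: "y \<bullet> (M *v x0) = 0" if yS: "y \<in> S" and yo: "y \<bullet> x0 = 0" for y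
    proof (rule ccontr)
      define a where "a = y \<bullet> (M *v x0)"
      assume "y \<bullet> (M *v x0) \<noteq> 0"
      then have a0: "a \<noteq> 0" by (simp add: a_def)
      define c where "c = lam * (y \<bullet> y) - q y"
      have key: "2 * t * a \<le> t^2 * c" for t
      proof -
        have zS: "x0 + t *\<^sub>R y \<in> S" using x0S yS less.prems(1)
          by (simp add: subspace_add subspace_scale)
        have "q (x0 + t *\<^sub>R y) = lam + 2 * t * a + t^2 * q y"
          unfolding q_def lam_def a_def using sym[of y x0] sym[of x0 y]
          by (simp add: matrix_vector_right_distrib matrix_vector_mult_scaleR inner_add_left
              inner_add_right power2_eq_square algebra_simps inner_commute)
        moreover have "(x0 + t *\<^sub>R y) \<bullet> (x0 + t *\<^sub>R y) = 1 + t^2 * (y \<bullet> y)"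
          using x0x0 yo by (simp add: inner_add_left inner_add_right power2_eq_square inner_commute)
        ultimately show ?thesis using qle[OF zS] unfolding c_def by (simp add: algebra_simps)
      qed
      define s where "s = 1 / (\<bar>c\<bar> + 1)"
      have s0: "s > 0" by (simp add: s_def add_pos_nonneg)
      have "s * c < 1" unfolding s_def by (simp add: divide_less_eq) linarith
      have "2 * (s * a) * a \<le> (s * a)^2 * c" using key[of "s * a"] .
      then have "s * a^2 * 2 \<le> s * a^2 * (s * c)" by (simp add: power2_eq_square algebra_simps)
      moreover have "s * a^2 > 0" using s0 a0 by simp
      ultimately have "2 \<le> s * c" by (metis mult_le_cancel_left_pos)
      then show False using \<open>s * c < 1\<close> by simp
    qed
    have eig: "M *v x0 = lam *\<^sub>R x0"
    proof -
      define y where "y = M *v x0 - lam *\<^sub>R x0"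
      have yS: "y \<in> S" unfolding y_def using less.prems x0S by (simp add: subspace_diff subspace_scale)
      have yo: "y \<bullet> x0 = 0" unfolding y_def lam_def q_def using x0x0
        by (simp add: inner_diff_left inner_commute[of "M *v x0" x0])
      have "y \<bullet> y = y \<bullet> (M *v x0) - lam * (y \<bullet> x0)" unfolding y_def
        by (simp add: inner_diff_right)
      also have "\<dots> = 0" using orth[OF yS yo] yo by simp
      finally show ?thesis unfolding y_def by simp
    qed
    define S' where "S' = {y \<in> S. y \<bullet> x0 = 0}"
    have subS': "subspace S'" unfolding S'_def using less.prems(1)
      by (auto simp: subspace_def inner_add_left)
    have invS': "M *v x \<in> S'" if "x \<in> S'" for x
      using that less.prems(2) sym[of x x0] eig unfolding S'_def by (auto simp: inner_commute)
    have x0nS': "x0 \<notin> S'" using x0x0 unfolding S'_def by auto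
    have "S' \<subset> S" using x0nS' x0S unfolding S'_def by blast
    then have "span S' \<subset> span S" using subS' less.prems(1) by (metis span_eq_iff)
    then have "dim S' < dim S" by (rule dim_psubset)
    then obtain B' \<mu>' where B': "B' \<subseteq> S'" "pairwise orthogonal B'"
      "\<forall>v\<in>B'. norm v = 1 \<and> M *v v = \<mu>' v *\<^sub>R v" "S' \<subseteq> span B'"
      using less.hyps[OF _ subS' invS'] by blast
    have x0B': "x0 \<notin> B'" using B'(1) x0nS' by blast
    define B where "B = insert x0 B'"
    define \<mu> where "\<mu> = \<mu>'(x0 := lam)"
    have "B \<subseteq> S" using B'(1) x0S unfolding B_def S'_def by auto
    moreover have "pairwise orthogonal B" unfolding B_def
      using B'(1,2) x0B' by (auto simp: pairwise_insert S'_def orthogonal_def inner_commute)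
    moreover have "\<forall>v\<in>B. norm v = 1 \<and> M *v v = \<mu> v *\<^sub>R v"
      using B'(3) x0B' nx0 eig unfolding B_def \<mu>_def by auto
    moreover have "S \<subseteq> span B"
    proof
      fix y assume yS: "y \<in> S"
      have "y - (y \<bullet> x0) *\<^sub>R x0 \<in> S'" unfolding S'_def using yS x0S less.prems(1) x0x0
        by (simp add: subspace_diff subspace_scale inner_diff_left)
      then have "y - (y \<bullet> x0) *\<^sub>R x0 \<in> span B" using B'(4) span_mono[of B' B] unfolding B_def by blast
      moreover have "(y \<bullet> x0) *\<^sub>R x0 \<in> span B" unfolding B_def by (simp add: span_base span_scale)
      ultimately have "(y - (y \<bullet> x0) *\<^sub>R x0) + (y \<bullet> x0) *\<^sub>R x0 \<in> span B" by (rule span_add)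
      then show "y \<in> span B" by simp
    qed
    ultimately show ?thesis by blast
  qed
qed


lemma spectral_indexed:
  fixes M :: "real^'n^'n"
  assumes sym: "\<And>x y. (M *v x) \<bullet> y = x \<bullet> (M *v y)"
  shows "\<exists>(b::'n \<Rightarrow> real^'n) \<mu>. (\<forall>i j. b i \<bullet> b j = (if i = j then 1 else 0)) \<and> (\<forall>i. M *v b i = \<mu> i *\<^sub>R b i)"
proof -
  obtain B \<mu> where B: "pairwise orthogonal B" "\<forall>v\<in>B. norm v = 1 \<and> M *v v = \<mu> v *\<^sub>R v"
    "UNIV \<subseteq> span B"
    using spectral_subspace[OF sym, of UNIV] by auto
  have "0 \<notin> B" using B(2) by force
  then have ind: "independent B" using B(1) pairwise_orthogonal_independent by blast
  then have fin: "finite B" using independent_bound by blast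
  have "card B = dim (span B)" using ind by (simp add: dim_eq_card_independent dim_span)
  also have "span B = UNIV" using B(3) by blast
  also have "dim (UNIV :: (real^'n) set) = CARD('n)" by (simp add: dim_UNIV DIM_cart)
  finally have cB: "card B = CARD('n)" .
  obtain h where h: "bij_betw h (UNIV::'n set) B"
    using finite_same_card_bij[of "UNIV::'n set" B] fin cB by auto
  have hB: "h i \<in> B" for i using h by (auto simp: bij_betw_def)
  have hinj: "h i = h j \<Longrightarrow> i = j" for i j using h by (auto simp: bij_betw_def inj_on_def)
  have "h i \<bullet> h j = (if i = j then 1 else 0)" for i j
  proof (cases "i = j")
    case True then show ?thesis using B(2) hB[of i] by (simp add: norm_eq_1)
  next
    case False then show ?thesis using B(1) hB[of i] hB[of j] hinj[of i j]
      by (auto simp: pairwise_def orthogonal_def)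
  qed
  moreover have "M *v h i = (\<mu> \<circ> h) i *\<^sub>R h i" for i using B(2) hB[of i] by simp
  ultimately show ?thesis by (intro exI[of _ h] exI[of _ "\<mu> \<circ> h"]) blast
qed

lemma poly_det: "poly (det P) t = det (\<chi> i j. poly (P $ i $ j) t)"
  unfolding det_def by (simp add: poly_sum poly_prod poly_of_int)

lemma mat_mult_vec: "mat t *v x = t *\<^sub>R x"
proof -
  have "(\<Sum>j\<in>UNIV. (if i = j then t else 0) * x $ j) = t * x $ i" for i
    by (simp add: if_distrib[of "\<lambda>a. a * _"] cong: if_cong)
  then show ?thesis by (simp add: vec_eq_iff matrix_vector_mult_def mat_def)
qed

lemma charpoly_eval: "poly (charpoly M) t = det (mat t - M)"
  unfolding charpoly_def poly_det
  by (rule arg_cong[where f=det]) (simp add: vec_eq_iff mat_def)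

lemma conj_entry:
  fixes b :: "'n::finite \<Rightarrow> real^'n"
  shows "(transpose (\<chi> i j. b j $ i) ** A ** (\<chi> i j. b j $ i)) $ i $ j = b i \<bullet> (A *v b j)"
  by (simp add: matrix_matrix_mult_def matrix_vector_mult_def inner_vec_def transpose_def
      sum_distrib_left sum_distrib_right mult.assoc mult.left_commute) (rule sum.swap)

lemma det_conj:
  fixes V :: "real^'n^'n"
  assumes "transpose V ** V = mat 1"
  shows "det (transpose V ** A ** V) = det A"
proof -
  have "det (transpose V) * det V = 1" using assms det_mul[of "transpose V" V] by simp
  then show ?thesis by (simp add: det_mul algebra_simps)
qed

lemma charpoly_spectral:
  fixes M :: "real^'n^'n"
  fixes b :: "'n \<Rightarrow> real^'n"
  assumes on: "\<And>i j. b i \<bullet> b j = (if i = j then 1 else 0)"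
    and ev: "\<And>i. M *v b i = \<mu> i *\<^sub>R b i"
  shows "charpoly M = (\<Prod>i\<in>UNIV. [:- \<mu> i, 1:])"
proof -
  define V where "V = (\<chi> i j. b j $ i)"
  have VV: "transpose V ** V = mat 1"
  proof -
    have "(transpose V ** V) $ i $ j = b i \<bullet> b j" for i j
      using conj_entry[of b "mat 1" i j] unfolding V_def
      by (simp only: matrix_mul_rid matrix_vector_mul_lid)
    then show ?thesis by (simp add: vec_eq_iff on mat_def)
  qed
  have "poly (charpoly M) t = poly (\<Prod>i\<in>UNIV. [:- \<mu> i, 1:]) t" for t
  proof -
    have "poly (charpoly M) t = det (transpose V ** (mat t - M) ** V)"
      by (simp add: charpoly_eval det_conj[OF VV])
    also have "transpose V ** (mat t - M) ** V = (\<chi> i j. if i = j then t - \<mu> i else 0)"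
      unfolding V_def
      by (simp add: vec_eq_iff conj_entry matrix_vector_mult_diff_rdistrib mat_mult_vec ev
          inner_diff_right on)
    also have "det \<dots> = (\<Prod>i\<in>UNIV. t - \<mu> i)" by (simp add: det_diagonal)
    finally show ?thesis by (simp add: poly_prod)
  qed
  then show ?thesis using poly_eq_poly_eq_iff by blast
qed

lemma order_prod_linear:
  fixes \<mu> :: "'i \<Rightarrow> real"
  assumes "finite I"
  shows "order a (\<Prod>i\<in>I. [:- \<mu> i, 1:]) = card {i\<in>I. \<mu> i = a}"
  using assms
proof (induction I rule: finite_induct)
  case empty
  have "order a (1::real poly) = 0" using order_root[of 1 a] by simp
  then show ?case by simp
next
  case (insert x F)
  have nz: "(\<Prod>i\<in>F. [:- \<mu> i, 1:]) \<noteq> 0" using insert.hyps(1) by simp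
  have o1: "order a [:- \<mu> x, 1:] = (if \<mu> x = a then 1 else 0)"
  proof (cases "\<mu> x = a")
    case True then show ?thesis using order_power_n_n[of a 1] by simp
  next
    case False then show ?thesis using order_root[of "[:- \<mu> x, 1:]" a] by simp
  qed
  have "order a (\<Prod>i\<in>insert x F. [:- \<mu> i, 1:]) = order a ([:- \<mu> x, 1:] * (\<Prod>i\<in>F. [:- \<mu> i, 1:]))"
    by (simp only: prod.insert[OF insert.hyps])
  also have "\<dots> = order a [:- \<mu> x, 1:] + order a (\<Prod>i\<in>F. [:- \<mu> i, 1:])"
    by (rule order_mult) (metis nz mult_eq_0_iff pCons_eq_0_iff one_neq_zero)
  also have "\<dots> = card {i\<in>insert x F. \<mu> i = a}"
  proof (cases "\<mu> x = a")
    case True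
    then have "{i\<in>insert x F. \<mu> i = a} = insert x {i\<in>F. \<mu> i = a}" by auto
    then show ?thesis using o1 insert True by simp
  next
    case False
    then have "{i\<in>insert x F. \<mu> i = a} = {i\<in>F. \<mu> i = a}" by auto
    then show ?thesis using o1 insert False by simp
  qed
  finally show ?case .
qed

lemma eig_count_spectral:
  fixes M :: "real^'n^'n" and \<mu> :: "'n \<Rightarrow> real"
  assumes "charpoly M = (\<Prod>i\<in>UNIV. [:- \<mu> i, 1:])"
  shows "eig_count_below M t = card {i. \<mu> i < t}"
proof -
  have roots: "{a. poly (charpoly M) a = 0 \<and> a < t} = \<mu> ` {i. \<mu> i < t}"
    using assms by (auto simp: poly_prod prod_zero_iff)
  have "card {i. \<mu> i < t} = (\<Sum>a\<in>\<mu> ` {i. \<mu> i < t}. card {i\<in>{i. \<mu> i < t}. \<mu> i = a})"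
    using sum.image_gen[of "{i. \<mu> i < t}" "\<lambda>_. (1::nat)" \<mu>] by simp
  also have "\<dots> = (\<Sum>a\<in>\<mu> ` {i. \<mu> i < t}. card {i. \<mu> i = a})"
    by (intro sum.cong refl arg_cong[where f=card]) auto
  finally show ?thesis unfolding eig_count_below_def roots using assms
    by (simp add: order_prod_linear)
qed


lemma ortho_inj:
  fixes b :: "'n::finite \<Rightarrow> real^'n"
  assumes on: "\<And>i j. b i \<bullet> b j = (if i = j then 1 else 0)"
  shows "inj b"
proof (rule injI)
  fix i j assume "b i = b j"
  then have "b i \<bullet> b j = 1" using on[of j j] by simp
  then show "i = j" using on[of i j] by (auto split: if_splits)
qed

lemma ortho_inner_sum:
  fixes b :: "'n::finite \<Rightarrow> real^'n"
  assumes on: "\<And>i j. b i \<bullet> b j = (if i = j then 1 else 0)"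
  shows "(\<Sum>i\<in>I. c i *\<^sub>R b i) \<bullet> (\<Sum>i\<in>I. d i *\<^sub>R b i) = (\<Sum>i\<in>I. c i * d i)"
proof -
  have bi: "b i \<bullet> (\<Sum>j\<in>I. d j *\<^sub>R b j) = (if i \<in> I then d i else 0)" for i
  proof -
    have "b i \<bullet> (\<Sum>j\<in>I. d j *\<^sub>R b j) = (\<Sum>j\<in>I. if i = j then d j else 0)"
      by (simp add: inner_sum_right on if_distrib[of "\<lambda>a. _ * a"] cong: if_cong)
    also have "\<dots> = (if i \<in> I then d i else 0)" by (cases "finite I") (simp_all add: sum.delta)
    finally show ?thesis .
  qed
  show ?thesis by (simp add: inner_sum_left bi cong: sum.cong)
qed

lemma span_ortho_repr:
  fixes b :: "'n::finite \<Rightarrow> real^'n"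
  assumes on: "\<And>i j. b i \<bullet> b j = (if i = j then 1 else 0)"
    and x: "x \<in> span (b ` I)"
  shows "\<exists>c. x = (\<Sum>i\<in>I. c i *\<^sub>R b i)"
proof -
  have fin: "finite (b ` I)" by simp
  obtain u where "x = (\<Sum>v\<in>b ` I. u v *\<^sub>R v)" using x span_finite[OF fin] by auto
  also have "\<dots> = (\<Sum>i\<in>I. u (b i) *\<^sub>R b i)"
    using sum.reindex[of b I "\<lambda>v. u v *\<^sub>R v"] ortho_inj[OF on] by (simp add: inj_on_def inj_def)
  finally show ?thesis by (intro exI[of _ "\<lambda>i. u (b i)"])
qed

lemma dim_ortho:
  fixes b :: "'n::finite \<Rightarrow> real^'n"
  assumes on: "\<And>i j. b i \<bullet> b j = (if i = j then 1 else 0)"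
  shows "dim (span (b ` I)) = card I"
proof -
  have "pairwise orthogonal (b ` I)"
    using on by (auto simp: pairwise_def orthogonal_def)
  moreover have "0 \<notin> b ` I" using on by (metis (no_types) image_iff inner_zero_left zero_neq_one)
  ultimately have "independent (b ` I)" by (rule pairwise_orthogonal_independent)
  then have "dim (span (b ` I)) = card (b ` I)" by (simp add: dim_span dim_eq_card_independent)
  also have "\<dots> = card I" using ortho_inj[OF on] by (simp add: card_image inj_on_def inj_def)
  finally show ?thesis .
qed

lemma quad_repr:
  fixes b :: "'n::finite \<Rightarrow> real^'n"
  assumes on: "\<And>i j. b i \<bullet> b j = (if i = j then 1 else 0)"
    and ev: "\<And>i. M *v b i = \<mu> i *\<^sub>R b i"
    and x: "x = (\<Sum>i\<in>I. c i *\<^sub>R b i)"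
  shows "x \<bullet> (M *v x) = (\<Sum>i\<in>I. c i * (c i * \<mu> i))" and "x \<bullet> x = (\<Sum>i\<in>I. c i * c i)"
proof -
  have "M *v x = (\<Sum>i\<in>I. (c i * \<mu> i) *\<^sub>R b i)"
    unfolding x by (simp add: linear_sum[OF matrix_vector_mul_linear] matrix_vector_mult_scaleR ev)
  then show "x \<bullet> (M *v x) = (\<Sum>i\<in>I. c i * (c i * \<mu> i))" using ortho_inner_sum[OF on] x by simp
  show "x \<bullet> x = (\<Sum>i\<in>I. c i * c i)" using ortho_inner_sum[OF on] x by simp
qed

lemma count_main:
  fixes L N :: "real^'n::finite^'n" and K :: "(real^'n) set" and b :: "'n \<Rightarrow> real^'n"
  assumes subK: "subspace K" and dimK: "dim K = m"
   and LK: "\<And>x. x \<in> K \<Longrightarrow> L *v x = 0"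
   and LKp: "\<And>x. (\<forall>y\<in>K. orthogonal y x) \<Longrightarrow> L *v x = x"
   and Nb: "\<And>x. \<bar>x \<bullet> (N *v x)\<bar> \<le> c * (x \<bullet> x)" and c: "c < 1/2"
   and on: "\<And>i j. b i \<bullet> b j = (if i = j then 1 else 0)"
   and ev: "\<And>i. (L + N) *v b i = \<mu> i *\<^sub>R b i"
  shows "card {i. \<mu> i < 1/2} = m"
proof -
  define M where "M = L + N"
  define q where "q = (\<lambda>x. x \<bullet> (M *v x))"
  have ev': "\<And>i. M *v b i = \<mu> i *\<^sub>R b i" using ev M_def by simp
  have qLN: "q x = x \<bullet> (L *v x) + x \<bullet> (N *v x)" for x
    unfolding q_def M_def by (simp add: matrix_vector_mult_add_rdistrib inner_add_right)
  define I where "I = {i. \<mu> i < 1/2}"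
  define U where "U = span (b ` I)"
  define W where "W = span (b ` (- I))"
  have dU: "dim U = card I" unfolding U_def by (rule dim_ortho[OF on])
  have dW: "dim W = CARD('n) - card I" unfolding W_def dim_ortho[OF on] by (simp add: Compl_eq_Diff_UNIV card_Diff_subset)
  have cI: "card I \<le> CARD('n)" by (simp add: card_mono)
  have xx0: "0 \<le> x \<bullet> x" for x :: "real^'n" by simp
  have qU: "q x \<le> 1/2 * (x \<bullet> x)" if xU: "x \<in> U" for x
  proof -
    obtain d where d: "x = (\<Sum>i\<in>I. d i *\<^sub>R b i)" using span_ortho_repr[OF on] xU U_def by blast
    have "q x = (\<Sum>i\<in>I. d i * (d i * \<mu> i))" using quad_repr(1)[OF on ev' d] q_def by simp
    also have "\<dots> \<le> (\<Sum>i\<in>I. d i * d i * (1/2))"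
    proof (rule sum_mono)
      fix i assume "i \<in> I"
      then have "\<mu> i \<le> 1/2" by (simp add: I_def)
      moreover have "0 \<le> d i * d i" by simp
      ultimately have "d i * d i * \<mu> i \<le> d i * d i * (1/2)" by (rule mult_left_mono)
      then show "d i * (d i * \<mu> i) \<le> d i * d i * (1/2)" by (simp add: mult.assoc)
    qed
    also have "\<dots> = 1/2 * (x \<bullet> x)" using quad_repr(2)[OF on ev' d] by (simp add: sum_distrib_right)
    finally show ?thesis .
  qed
  have qW: "q x \<ge> 1/2 * (x \<bullet> x)" if xW: "x \<in> W" for x
  proof -
    obtain d where d: "x = (\<Sum>i\<in>-I. d i *\<^sub>R b i)" using span_ortho_repr[OF on] xW W_def by blast
    have "1/2 * (x \<bullet> x) = (\<Sum>i\<in>-I. d i * d i * (1/2))" using quad_repr(2)[OF on ev' d] by (simp add: sum_distrib_right)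
    also have "\<dots> \<le> (\<Sum>i\<in>-I. d i * (d i * \<mu> i))"
    proof (rule sum_mono)
      fix i assume "i \<in> -I"
      then have "1/2 \<le> \<mu> i" by (simp add: I_def)
      moreover have "0 \<le> d i * d i" by simp
      ultimately have "d i * d i * (1/2) \<le> d i * d i * \<mu> i" by (rule mult_left_mono)
      then show "d i * d i * (1/2) \<le> d i * (d i * \<mu> i)" by (simp add: mult.assoc)
    qed
    also have "\<dots> = q x" using quad_repr(1)[OF on ev' d] q_def by simp
    finally show ?thesis .
  qed
  have subU: "subspace U" and subW: "subspace W" unfolding U_def W_def by simp_all
  define Kp where "Kp = {y \<in> UNIV. \<forall>x\<in>K. orthogonal x y}"
  have subKp: "subspace Kp" unfolding Kp_def
    by (auto simp: subspace_def orthogonal_def inner_add_right)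
  have dKp: "dim Kp + m = CARD('n)"
    using dim_subspace_orthogonal_to_vectors[OF subK subspace_UNIV] dimK unfolding Kp_def
    by (simp add: dim_UNIV DIM_cart)
  have KW: "K \<inter> W = {0}"
  proof (intro equalityI subsetI)
    fix x assume "x \<in> K \<inter> W"
    then have "q x = x \<bullet> (N *v x)" "q x \<ge> 1/2 * (x \<bullet> x)" using qLN[of x] LK[of x] qW[of x] by auto
    then have "1/2 * (x \<bullet> x) \<le> c * (x \<bullet> x)" using Nb[of x] by linarith
    then have "(1/2 - c) * (x \<bullet> x) \<le> 0" by (simp add: left_diff_distrib)
    then have "x \<bullet> x \<le> 0" using c by (auto simp: mult_le_0_iff)
    then show "x \<in> {0}" using inner_gt_zero_iff[of x] by (simp add: not_less[symmetric])
  next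
    fix x :: "real^'n" assume "x \<in> {0}" then show "x \<in> K \<inter> W" using subK subW subspace_0 by auto
  qed
  have UKp: "U \<inter> Kp = {0}"
  proof (intro equalityI subsetI)
    fix x assume x: "x \<in> U \<inter> Kp"
    then have "L *v x = x" using LKp unfolding Kp_def by auto
    then have "q x = x \<bullet> x + x \<bullet> (N *v x)" "q x \<le> 1/2 * (x \<bullet> x)" using qLN[of x] qU[of x] x by auto
    then have "x \<bullet> x - c * (x \<bullet> x) \<le> 1/2 * (x \<bullet> x)" using Nb[of x] by linarith
    then have "(1/2 - c) * (x \<bullet> x) \<le> 0" by (simp add: left_diff_distrib)
    then have "x \<bullet> x \<le> 0" using c by (auto simp: mult_le_0_iff)
    then show "x \<in> {0}" using inner_gt_zero_iff[of x] by (simp add: not_less[symmetric])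
  next
    fix x :: "real^'n" assume "x \<in> {0}" then show "x \<in> U \<inter> Kp" using subU subKp subspace_0 by auto
  qed
  have "dim {x + y |x y. x \<in> K \<and> y \<in> W} + dim (K \<inter> W) = dim K + dim W"
    by (rule dim_sums_Int[OF subK subW])
  moreover have "dim {x + y |x y. x \<in> K \<and> y \<in> W} \<le> CARD('n)" by (rule dim_subset_UNIV_cart)
  ultimately have le1: "m \<le> card I" using KW dimK dW cI by simp
  have "dim {x + y |x y. x \<in> U \<and> y \<in> Kp} + dim (U \<inter> Kp) = dim U + dim Kp"
    by (rule dim_sums_Int[OF subU subKp])
  moreover have "dim {x + y |x y. x \<in> U \<and> y \<in> Kp} \<le> CARD('n)" by (rule dim_subset_UNIV_cart)
  ultimately have le2: "card I \<le> m" using UKp dU dKp by simp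
  show ?thesis using le1 le2 I_def by simp
qed


lemma diag_conj_entry:
  "((\<chi> i j. if i = j then f i else 0) ** B ** (\<chi> i j. if i = j then f i else 0)) $ i $ j
    = f i * B $ i $ j * f j"
proof -
  have "((\<chi> i j. if i = j then f i else 0) ** B) $ i $ j = f i * B $ i $ j" for i j
    by (simp add: matrix_matrix_mult_def if_distrib[of "\<lambda>a. a * _"] cong: if_cong)
  then show ?thesis
    by (simp add: matrix_matrix_mult_def if_distrib[of "\<lambda>a. _ * a"] cong: if_cong)
qed

context
  fixes E :: "'n::finite \<Rightarrow> 'n \<Rightarrow> bool" and R :: "('n \<times> 'n) set"
  assumes eqR: "equiv UNIV R" and ER: "\<And>x y. E x y \<longleftrightarrow> x \<noteq> y \<and> (x, y) \<in> R"
begin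

definition kk :: "'n \<Rightarrow> nat" where "kk i = card (R `` {i})"

lemma self_in: "i \<in> R `` {i}"
  using equiv_class_self[OF eqR] by simp

lemma kk_pos: "kk i \<ge> 1"
  unfolding kk_def using self_in[of i] by (metis One_nat_def Suc_leI card_gt_0_iff empty_iff finite)

lemma rel_iff: "(i, j) \<in> R \<longleftrightarrow> R `` {i} = R `` {j}"
  using equiv_class_eq_iff[OF eqR] by simp

lemma kk_eq: "(i, j) \<in> R \<Longrightarrow> kk i = kk j"
  unfolding kk_def using rel_iff by simp

lemma degree_eq: "degree E i = kk i - 1"
proof -
  have "{j. E i j} = R `` {i} - {i}" using ER by auto
  then show ?thesis unfolding degree_def kk_def using self_in[of i] by (simp add: card_Diff_singleton)
qed

lemma L_entry:
  "norm_laplacian E $ i $ j = (if i = j then 1 else 0) - (if (i, j) \<in> R then 1 / real (kk i) else 0)"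
proof -
  have dk: "real (degree E i) + 1 = real (kk i)" for i using degree_eq[of i] kk_pos[of i] by simp
  have C: "C_inv_sqrt E = (\<chi> i j. if i = j then 1 / sqrt (real (kk i)) else 0)"
    unfolding C_inv_sqrt_def dk ..
  have e: "norm_laplacian E $ i $ j = 1 / sqrt (real (kk i)) * (deg_mat E - adj_mat E) $ i $ j * (1 / sqrt (real (kk j)))"
    unfolding norm_laplacian_def C by (rule diag_conj_entry)
  show ?thesis
  proof (cases "i = j")
    case True
    have "(i, i) \<in> R" using self_in[of i] by simp
    moreover have "\<not> E i i" using ER by simp
    ultimately show ?thesis using True kk_pos[of i] unfolding e
      by (simp add: deg_mat_def adj_mat_def degree_eq of_nat_diff field_simps)
  next
    case False
    show ?thesis
    proof (cases "(i, j) \<in> R")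
      case True
      then have "kk j = kk i" using kk_eq by simp
      moreover have "E i j" using ER True False by simp
      ultimately show ?thesis using False True kk_pos[of i] unfolding e
        by (simp add: deg_mat_def adj_mat_def)
    next
      case F2: False
      then have "\<not> E i j" using ER by simp
      then show ?thesis using False F2 unfolding e by (simp add: deg_mat_def adj_mat_def)
    qed
  qed
qed

lemma L_sym: "transpose (norm_laplacian E) = norm_laplacian E"
proof -
  have "(j, i) \<in> R \<longleftrightarrow> (i, j) \<in> R" for i j using eqR by (auto elim: equivE symE)
  then show ?thesis using kk_eq by (auto simp: vec_eq_iff transpose_def L_entry)
qed

lemma L_mult: "(norm_laplacian E *v x) $ i = x $ i - (\<Sum>j\<in>R `` {i}. x $ j) / real (kk i)"
proof -
  have s1: "(\<Sum>j\<in>UNIV. (if i = j then 1 else 0) * x $ j) = x $ i"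
    by (simp add: if_distrib[of "\<lambda>a. a * _"] cong: if_cong)
  have "(\<Sum>j\<in>UNIV. (if (i, j) \<in> R then 1 / real (kk i) else 0) * x $ j)
      = (\<Sum>j\<in>UNIV. if (i, j) \<in> R then x $ j / real (kk i) else 0)"
    by (rule sum.cong) auto
  also have "\<dots> = (\<Sum>j\<in>{j\<in>UNIV. (i, j) \<in> R}. x $ j / real (kk i))"
    by (rule sum.inter_filter[symmetric]) simp
  also have "{j\<in>UNIV. (i, j) \<in> R} = R `` {i}" by auto
  finally have s2: "(\<Sum>j\<in>UNIV. (if (i, j) \<in> R then 1 / real (kk i) else 0) * x $ j) = (\<Sum>j\<in>R `` {i}. x $ j) / real (kk i)"
    by (simp add: sum_divide_distrib)
  show ?thesis
    by (simp add: matrix_vector_mult_def L_entry left_diff_distrib sum_subtractf s1 s2)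
qed

definition ind :: "'n set \<Rightarrow> real^'n" where "ind X = (\<chi> j. if j \<in> X then 1 else 0)"

lemma class_of: "X \<in> UNIV // R \<Longrightarrow> i \<in> X \<Longrightarrow> R `` {i} = X"
  by (metis UNIV_I eqR equiv_class_eq_iff quotientE Image_singleton_iff)

lemma L_ind: assumes X: "X \<in> UNIV // R" shows "norm_laplacian E *v ind X = 0"
proof -
  have "(norm_laplacian E *v ind X) $ i = 0" for i
  proof (cases "i \<in> X")
    case True
    then have cl: "R `` {i} = X" using class_of X by blast
    have "(\<Sum>j\<in>R `` {i}. ind X $ j) = real (kk i)" unfolding kk_def cl by (simp add: ind_def)
    then show ?thesis using True kk_pos[of i] by (simp add: L_mult ind_def)
  next
    case False
    have "R `` {i} \<in> UNIV // R" by (simp add: quotientI)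
    then have "R `` {i} \<inter> X = {}" using quotient_disj[OF eqR _ X] self_in[of i] False by blast
    then have "(\<Sum>j\<in>R `` {i}. ind X $ j) = 0" by (intro sum.neutral) (auto simp: ind_def)
    then show ?thesis using False by (simp add: L_mult ind_def)
  qed
  then show ?thesis by (simp add: vec_eq_iff)
qed

definition KK :: "(real^'n) set" where "KK = span (ind ` (UNIV // R))"

lemma L_KK: assumes x: "x \<in> KK" shows "norm_laplacian E *v x = 0"
proof -
  have sub: "subspace {x. norm_laplacian E *v x = 0}"
    using linear_subspace_kernel[OF matrix_vector_mul_linear[of "norm_laplacian E"]] by simp
  show ?thesis using span_induct[OF x[unfolded KK_def] sub] L_ind by auto
qed

lemma ind_inner: "ind X \<bullet> x = (\<Sum>j\<in>X. x $ j)"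
proof -
  have "ind X \<bullet> x = (\<Sum>j\<in>UNIV. if j \<in> X then x $ j else 0)"
    unfolding ind_def inner_vec_def by (rule sum.cong) auto
  also have "\<dots> = (\<Sum>j\<in>X. x $ j)" by (simp add: sum.inter_filter[symmetric])
  finally show ?thesis .
qed

lemma L_KKperp: assumes "\<forall>y\<in>KK. orthogonal y x" shows "norm_laplacian E *v x = x"
proof -
  have "(norm_laplacian E *v x) $ i = x $ i" for i
  proof -
    have "ind (R `` {i}) \<in> KK" unfolding KK_def by (intro span_base imageI quotientI) simp
    then have "ind (R `` {i}) \<bullet> x = 0" using assms by (auto simp: orthogonal_def)
    then show ?thesis by (simp add: L_mult ind_inner)
  qed
  then show ?thesis by (simp add: vec_eq_iff)
qed

lemma dim_KK: "dim KK = card (UNIV // R)"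
proof -
  have ne: "X \<noteq> {}" if "X \<in> UNIV // R" for X using that self_in by (auto elim: quotientE)
  have inj: "inj_on ind (UNIV // R)"
  proof (rule inj_onI)
    fix X Y assume "ind X = ind Y"
    then have "\<forall>j. (j \<in> X) = (j \<in> Y)" by (auto simp: ind_def vec_eq_iff split: if_splits)
    then show "X = Y" by blast
  qed
  have "pairwise orthogonal (ind ` (UNIV // R))"
  proof (rule pairwiseI, clarify)
    fix X Y assume X: "X \<in> UNIV // R" and Y: "Y \<in> UNIV // R" and ne: "ind X \<noteq> ind Y"
    then have "X \<inter> Y = {}" using quotient_disj[OF eqR X Y] by auto
    then have "(\<Sum>j\<in>X. ind Y $ j) = 0" by (intro sum.neutral) (auto simp: ind_def)
    then show "orthogonal (ind X) (ind Y)" by (simp add: orthogonal_def ind_inner)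
  qed
  moreover have "0 \<notin> ind ` (UNIV // R)"
  proof
    assume "0 \<in> ind ` (UNIV // R)"
    then obtain X where X: "X \<in> UNIV // R" "ind X = 0" by auto
    then obtain j where "j \<in> X" using ne by blast
    then have "ind X $ j = 1" by (simp add: ind_def)
    then show False using X(2) by simp
  qed
  ultimately have "independent (ind ` (UNIV // R))" by (rule pairwise_orthogonal_independent)
  then have "dim KK = card (ind ` (UNIV // R))" unfolding KK_def by (simp add: dim_span dim_eq_card_independent)
  also have "\<dots> = card (UNIV // R)" using inj by (simp add: card_image)
  finally show ?thesis .
qed

end


lemma transpose_add_mat: "transpose (A + B) = transpose A + (transpose B :: 'a::semiring_1^'n^'m)"
  by (simp add: vec_eq_iff transpose_def)

theorem lemma2:
  fixes E :: "'n::finite \<Rightarrow> 'n \<Rightarrow> bool" and m :: nat and N :: "real^'n^'n"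
  assumes "cluster_graph E m"
    and "transpose N = N"
    and "norm2 N < 1/2"
  shows "eig_count_below (norm_laplacian E + N) (1/2) = m"
proof -
  obtain R where eqR: "equiv UNIV R" and ER0: "\<forall>x y. E x y \<longleftrightarrow> x \<noteq> y \<and> (x, y) \<in> R"
    and cR: "card (UNIV // R) = m"
    using assms(1) unfolding cluster_graph_def by blast
  have ER: "\<And>x y. E x y \<longleftrightarrow> x \<noteq> y \<and> (x, y) \<in> R" using ER0 by blast
  define L where "L = norm_laplacian E"
  define M where "M = L + N"
  have tM: "transpose M = M"
    unfolding M_def L_def using L_sym[OF eqR ER] assms(2) by (simp add: transpose_add_mat)
  have sym: "(M *v x) \<bullet> y = x \<bullet> (M *v y)" for x y
  proof -
    have "(M *v x) \<bullet> y = (x v* transpose M) \<bullet> y" by (simp add: vector_transpose_matrix)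
    also have "\<dots> = x \<bullet> (M *v y)" by (simp add: tM dot_lmul_matrix)
    finally show ?thesis .
  qed
  obtain b :: "'n \<Rightarrow> real^'n" and \<mu> where on: "\<And>i j. b i \<bullet> b j = (if i = j then 1 else 0)"
    and ev: "\<And>i. M *v b i = \<mu> i *\<^sub>R b i"
    using spectral_indexed[OF sym] by blast
  have "eig_count_below M (1/2) = card {i. \<mu> i < 1/2}"
    by (rule eig_count_spectral[OF charpoly_spectral[OF on ev]])
  also have "\<dots> = m"
  proof (rule count_main[of "KK R" m L N "norm2 N" b \<mu>])
    show "subspace (KK R)" unfolding KK_def[OF eqR ER] by simp
    show "dim (KK R) = m" using dim_KK[OF eqR ER] cR by simp
    show "\<And>x. x \<in> KK R \<Longrightarrow> L *v x = 0" unfolding L_def using L_KK[OF eqR ER] by blast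
    show "\<And>x. \<forall>y\<in>KK R. orthogonal y x \<Longrightarrow> L *v x = x" unfolding L_def using L_KKperp[OF eqR ER] by blast
    show "\<bar>x \<bullet> (N *v x)\<bar> \<le> norm2 N * (x \<bullet> x)" for x
    proof -
      have "\<bar>x \<bullet> (N *v x)\<bar> \<le> norm x * norm (N *v x)" by (rule Cauchy_Schwarz_ineq2)
      also have "\<dots> \<le> norm x * (norm2 N * norm x)"
        unfolding norm2_def by (intro mult_left_mono onorm matrix_vector_mul_bounded_linear) simp
      also have "\<dots> = norm2 N * (x \<bullet> x)" by (simp add: power2_norm_eq_inner[symmetric] power2_eq_square)
      finally show ?thesis .
    qed
    show "norm2 N < 1/2" by (rule assms(3))
    show "\<And>i j. b i \<bullet> b j = (if i = j then 1 else 0)" by (rule on)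
    show "\<And>i. (L + N) *v b i = \<mu> i *\<^sub>R b i" using ev M_def by simp
  qed
  finally show ?thesis unfolding M_def L_def .
qed

end
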